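(* Let $P$ be a Poisson tensor on $\mathbb{R}^3$, let $H\in C^\infty(\mathbb{R}^3)$, let $S\in C^\infty(\mathbb{R}^3)$ satisfy $PdS=0$, and let $g$ be the symmetric tensor with components $g^{ij}=H^iH^j-\delta^{ij}\sum_k H^kH^k$. If $x$ is a regular point of $P$ (i.e. $P(x)\neq 0$) with $d_xS\neq 0$, then $g\,d_xS=0$ if and only if $P\,d_xH=0$.
   Context: $\mathbb{R}^3$ carries the standard Euclidean metric, used to identify tangent and cotangent spaces with $\mathbb{R}^3$; $H^i=H_i=\partial H/\partial x^i$. A Poisson tensor is a skew-symmetric bivector field satisfying the Jacobi identity. *)

theory Defs
  imports "HOL-Analysis.Analysis"
begin

definition partial :: "3 \<Rightarrow> (real^3 \<Rightarrow> real) \<Rightarrow> real^3 \<Rightarrow> real" where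
  "partial i f x = frechet_derivative f (at x) (axis i 1)"

fun iter_partial :: "3 list \<Rightarrow> (real^3 \<Rightarrow> real) \<Rightarrow> real^3 \<Rightarrow> real" where
  "iter_partial [] f = f"
| "iter_partial (i # is) f = partial i (iter_partial is f)"

definition smooth :: "(real^3 \<Rightarrow> real) \<Rightarrow> bool" where
  "smooth f \<longleftrightarrow> (\<forall>is x. iter_partial is f differentiable (at x))"

text \<open>Differential (gradient, via the Euclidean metric): components H^i = dH/dx^i.\<close>
definition grad :: "(real^3 \<Rightarrow> real) \<Rightarrow> real^3 \<Rightarrow> real^3" where
  "grad f x = (\<chi> i. partial i f x)"

definition poisson_tensor :: "(real^3 \<Rightarrow> real^3^3) \<Rightarrow> bool" where
  "poisson_tensor P \<longleftrightarrow>
     (\<forall>i j. smooth (\<lambda>y. P y $ i $ j)) \<and>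
     (\<forall>i j y. P y $ i $ j = - (P y $ j $ i)) \<and>
     (\<forall>i j k y. (\<Sum>l\<in>UNIV.
          P y $ i $ l * partial l (\<lambda>z. P z $ j $ k) y
        + P y $ j $ l * partial l (\<lambda>z. P z $ k $ i) y
        + P y $ k $ l * partial l (\<lambda>z. P z $ i $ j) y) = 0)"

definition gtensor :: "(real^3 \<Rightarrow> real) \<Rightarrow> real^3 \<Rightarrow> real^3^3" where
  "gtensor H x = (\<chi> i j. grad H x $ i * grad H x $ j
      - (if i = j then 1 else 0) * (\<Sum>k\<in>UNIV. grad H x $ k * grad H x $ k))"

end

theory Submission imports Defs begin
lemma par:
  fixes u1 u2 u3 w1 w2 w3 :: real
  assumes nz: "u1* u1+u2* u2+u3* u3 \<noteq> 0"
    and c1: "u2* w3-u3* w2 = 0" and c2: "u3* w1-u1* w3 = 0" and c3: "u1* w2-u2* w1 = 0"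
  shows "\<exists>t. w1 = t* u1 \<and> w2 = t* u2 \<and> w3 = t* u3"
proof -
  define n where "n = u1* u1+u2* u2+u3* u3"
  define d where "d = u1* w1+u2* w2+u3* w3"
  have e1: "n* w1 - d* u1 = u2* (u2* w1-u1* w2) - u3* (u1* w3-u3* w1)" unfolding n_def d_def by algebra
  have e2: "n* w2 - d* u2 = u3* (u3* w2-u2* w3) - u1* (u2* w1-u1* w2)" unfolding n_def d_def by algebra
  have e3: "n* w3 - d* u3 = u1* (u1* w3-u3* w1) - u2* (u3* w2-u2* w3)" unfolding n_def d_def by algebra
  have "n \<noteq> 0" using nz n_def by simp
  have c1': "u3* w2-u2* w3 = 0" using c1 by simp
  have c2': "u1* w3-u3* w1 = 0" using c2 by simp
  have c3': "u2* w1-u1* w2 = 0" using c3 by simp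
  have "n * w1 - d * u1 = 0" by (metis e1 c2' c3' mult_zero_right diff_zero)
  then have f1: "n * w1 = d * u1" by simp
  have "n * w2 - d * u2 = 0" by (metis e2 c1' c3' mult_zero_right diff_zero)
  then have f2: "n * w2 = d * u2" by simp
  have "n * w3 - d * u3 = 0" by (metis e3 c1' c2' mult_zero_right diff_zero)
  then have f3: "n * w3 = d * u3" by simp
  have "w1 = (d/n) * u1" "w2 = (d/n) * u2" "w3 = (d/n) * u3"
    using f1 f2 f3 \<open>n \<noteq> 0\<close> by (simp_all add: field_simps)
  then show ?thesis by blast
qed

lemma sq_nz: "(a::real) \<noteq> 0 \<or> b \<noteq> 0 \<or> c \<noteq> 0 \<Longrightarrow> a* a+b* b+c* c \<noteq> 0"
  by (smt (verit) not_sum_squares_lt_zero sum_squares_eq_zero_iff mult_nonneg_nonneg zero_le_square)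

lemma core:
  fixes a b c s1 s2 s3 h1 h2 h3 :: real
  assumes p: "a \<noteq> 0 \<or> b \<noteq> 0 \<or> c \<noteq> 0" and s: "s1 \<noteq> 0 \<or> s2 \<noteq> 0 \<or> s3 \<noteq> 0"
    and P1: "a* s2+b* s3=0" and P2: "-a* s1+c* s3=0" and P3: "-b* s1-c* s2=0"
  shows "(h1* (h1* s1+h2* s2+h3* s3) - (h1* h1+h2* h2+h3* h3)* s1 = 0 \<and>
          h2* (h1* s1+h2* s2+h3* s3) - (h1* h1+h2* h2+h3* h3)* s2 = 0 \<and>
          h3* (h1* s1+h2* s2+h3* s3) - (h1* h1+h2* h2+h3* h3)* s3 = 0)
     \<longleftrightarrow> (a* h2+b* h3=0 \<and> -a* h1+c* h3=0 \<and> -b* h1-c* h2=0)"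
proof
  assume g: "h1* (h1* s1+h2* s2+h3* s3) - (h1* h1+h2* h2+h3* h3)* s1 = 0 \<and>
          h2* (h1* s1+h2* s2+h3* s3) - (h1* h1+h2* h2+h3* h3)* s2 = 0 \<and>
          h3* (h1* s1+h2* s2+h3* s3) - (h1* h1+h2* h2+h3* h3)* s3 = 0"
  show "a* h2+b* h3=0 \<and> -a* h1+c* h3=0 \<and> -b* h1-c* h2=0"
  proof (cases "h1 = 0 \<and> h2 = 0 \<and> h3 = 0")
    case True then show ?thesis by simp
  next
    case False
    define n where "n = h1* h1+h2* h2+h3* h3"
    have n: "n \<noteq> 0" using sq_nz[of h1 h2 h3] False unfolding n_def by blast
    define d where "d = h1* s1+h2* s2+h3* s3"
    have g1: "h1* d - n* s1 = 0" and g2: "h2* d - n* s2 = 0" and g3: "h3* d - n* s3 = 0"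
      using g unfolding n_def d_def by auto
    have "n* (s2* h3 - s3* h2) = 0" using g2 g3 by algebra
    hence c1: "s2* h3 - s3* h2 = 0" using n by simp
    have "n* (s3* h1 - s1* h3) = 0" using g1 g3 by algebra
    hence c2: "s3* h1 - s1* h3 = 0" using n by simp
    have "n* (s1* h2 - s2* h1) = 0" using g1 g2 by algebra
    hence c3: "s1* h2 - s2* h1 = 0" using n by simp
    obtain t where "h1 = t* s1" "h2 = t* s2" "h3 = t* s3"
      using par[OF sq_nz[OF s] c1 c2 c3] by blast
    then show ?thesis using P1 P2 P3 by algebra
  qed
next
  assume h: "a* h2+b* h3=0 \<and> -a* h1+c* h3=0 \<and> -b* h1-c* h2=0"
  have pn: "c* c+(-b)* (-b)+a* a \<noteq> 0" using sq_nz[of c "-b" a] p by auto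
  obtain t where t: "s1 = t* c" "s2 = t* (-b)" "s3 = t* a"
  proof -
    have "(-b)* s3-a* s2 = 0" "a* s1-c* s3 = 0" "c* s2-(-b)* s1 = 0" using P1 P2 P3 by algebra+
    then show ?thesis using par[OF pn] that by blast
  qed
  obtain l where l: "h1 = l* c" "h2 = l* (-b)" "h3 = l* a"
  proof -
    have "(-b)* h3-a* h2 = 0" "a* h1-c* h3 = 0" "c* h2-(-b)* h1 = 0" using h by algebra+
    then show ?thesis using par[OF pn] that by blast
  qed
  show "h1* (h1* s1+h2* s2+h3* s3) - (h1* h1+h2* h2+h3* h3)* s1 = 0 \<and>
          h2* (h1* s1+h2* s2+h3* s3) - (h1* h1+h2* h2+h3* h3)* s2 = 0 \<and>
          h3* (h1* s1+h2* s2+h3* s3) - (h1* h1+h2* h2+h3* h3)* s3 = 0"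
    unfolding t l by algebra
qed

theorem mainTheorem7:
  fixes P :: "real^3 \<Rightarrow> real^3^3" and H S :: "real^3 \<Rightarrow> real" and x :: "real^3"
  assumes "poisson_tensor P"
    and "smooth H"
    and "smooth S"
    and "\<forall>y. P y *v grad S y = 0"
    and "P x \<noteq> 0"
    and "grad S x \<noteq> 0"
  shows "gtensor H x *v grad S x = 0 \<longleftrightarrow> P x *v grad H x = 0"
proof -
  define M where "M = P x"
  define s where "s = grad S x"
  define h where "h = grad H x"
  have skew: "\<And>i j. M $ i $ j = - (M $ j $ i)" using assms(1) unfolding poisson_tensor_def M_def by blast
  have d: "\<And>i. M $ i $ i = 0" proof - fix i show "M $ i $ i = 0" using skew[of i i] by linarith qed
  define a where "a = M $ 1 $ 2"
  define b where "b = M $ 1 $ 3"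
  define c where "c = M $ 2 $ 3"
  have M21: "M $ 2 $ 1 = - a" and M31: "M $ 3 $ 1 = - b" and M32: "M $ 3 $ 2 = - c"
    using skew[of 2 1] skew[of 3 1] skew[of 3 2] unfolding a_def b_def c_def by simp_all
  have p: "a \<noteq> 0 \<or> b \<noteq> 0 \<or> c \<noteq> 0"
  proof (rule ccontr)
    assume "\<not> ?thesis"
    then have "M = 0" unfolding vec_eq_iff forall_3
      using d M21 M31 M32 by (simp add: a_def b_def c_def)
    then show False using assms(5) M_def by simp
  qed
  have sn: "s $ 1 \<noteq> 0 \<or> s $ 2 \<noteq> 0 \<or> s $ 3 \<noteq> 0"
    using assms(6) unfolding s_def[symmetric] by (auto simp: vec_eq_iff forall_3)
  have Ps: "M *v s = 0" using assms(4) M_def s_def by simp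
  then have P1: "a * s$2 + b * s$3 = 0" and P2: "-a * s$1 + c * s$3 = 0" and P3: "-b * s$1 - c * s$2 = 0"
    unfolding vec_eq_iff forall_3 matrix_vector_mult_def
    by (simp_all add: sum_3 d M21 M31 M32 a_def[symmetric] b_def[symmetric] c_def[symmetric])
  have L: "gtensor H x *v s = 0 \<longleftrightarrow>
          (h$1 * (h$1 * s$1+h$2 * s$2+h$3 * s$3) - (h$1 * h$1+h$2 * h$2+h$3 * h$3) * s$1 = 0 \<and>
          h$2 * (h$1 * s$1+h$2 * s$2+h$3 * s$3) - (h$1 * h$1+h$2 * h$2+h$3 * h$3) * s$2 = 0 \<and>
          h$3 * (h$1 * s$1+h$2 * s$2+h$3 * s$3) - (h$1 * h$1+h$2 * h$2+h$3 * h$3) * s$3 = 0)"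
    unfolding vec_eq_iff forall_3 matrix_vector_mult_def gtensor_def h_def[symmetric]
    by (simp add: sum_3 algebra_simps)
  have R: "M *v h = 0 \<longleftrightarrow> (a * h$2 + b * h$3 = 0 \<and> -a * h$1 + c * h$3 = 0 \<and> -b * h$1 - c * h$2 = 0)"
    unfolding vec_eq_iff forall_3 matrix_vector_mult_def
    by (simp add: sum_3 d M21 M31 M32 a_def[symmetric] b_def[symmetric] c_def[symmetric])
  show ?thesis
    using core[OF p sn P1 P2 P3, of "h$1" "h$2" "h$3"] L R
    unfolding M_def s_def h_def by simp
qed

end
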